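(* Let $n$ be a positive integer. The set $$\Big\{\tbinom{n}{k}\big(a^{\otimes k}\otimes(a^c)^{\otimes(n-k)}\big)^\vee\ :\ k=0,\ldots,n\Big\}$$ is a complete set of primitive orthogonal idempotents in $\mathrm{Sym}^n\mathbb{C}[e_1]$.
   Context: $\mathbb{C}[e_1]=\mathbb{R}[e_1]\otimes_\mathbb{R}\mathbb{C}$ is the commutative $\mathbb{C}$-algebra with basis $1,e_1$ and $e_1^2=-1$. $\mathbb{C}[e_1]^{\otimes n}$ is the $n$-fold tensor power over $\mathbb{C}$ with componentwise multiplication; $\mathfrak S_n$ acts by $\sigma(x_1\otimes\cdots\otimes x_n)=x_{\sigma^{-1}(1)}\otimes\cdots\otimes x_{\sigma^{-1}(n)}$; $x^\vee=\frac1{n!}\sum_{\sigma\in\mathfrak S_n}\sigma(x)$; $\mathrm{Sym}^n\mathbb{C}[e_1]$ is the subalgebra of fixed tensors. $a=\frac12(1+\sqrt{-1}e_1)$, $a^c=\frac12(1-\sqrt{-1}e_1)$. In a unital associative ring: idempotent $x^2=x$; orthogonal means pairwise products zero; a nonzero idempotent is primitive if not a sum of two nonzero orthogonal idempotents; a set of orthogonal idempotents is complete if it sums to $1$. *)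

theory Defs
  imports Complex_Main "HOL-Combinatorics.Permutations"
begin

text \<open>
An element x + y e1 of C[e1] is represented by the pair (x, y) of complex numbers.
The n-fold tensor power C[e1]^{(x) n} has the C-basis e_S, S a subset of {0..<n},
where e_S is the pure tensor with e1 in the positions of S and 1 elsewhere.
A tensor is represented by its coefficient function on subsets of {0..<n}
(coefficients outside Pow {0..<n} are zero).
\<close>

type_synonym ce1 = "complex \<times> complex"
type_synonym tensor = "nat set \<Rightarrow> complex"

definition tensors :: "nat \<Rightarrow> tensor set" where
  "tensors n = {x. \<forall>S. \<not> S \<subseteq> {..<n} \<longrightarrow> x S = 0}"

definition tzero :: tensor where
  "tzero = (\<lambda>S. 0)"

definition tadd :: "tensor \<Rightarrow> tensor \<Rightarrow> tensor" where
  "tadd x y = (\<lambda>S. x S + y S)"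

definition tscale :: "complex \<Rightarrow> tensor \<Rightarrow> tensor" where
  "tscale c x = (\<lambda>S. c * x S)"

definition tsum :: "'i set \<Rightarrow> ('i \<Rightarrow> tensor) \<Rightarrow> tensor" where
  "tsum I f = (\<lambda>S. \<Sum>k\<in>I. f k S)"

definition tone :: "nat \<Rightarrow> tensor" where
  "tone n = (\<lambda>S. if S = {} then 1 else 0)"

text \<open>Componentwise multiplication: on basis tensors, since e1^2 = -1 and C[e1] is
commutative, e_A * e_B = (-1)^|A \<inter> B| e_(A \<triangle> B); extended bilinearly.\<close>
definition tmul :: "nat \<Rightarrow> tensor \<Rightarrow> tensor \<Rightarrow> tensor" where
  "tmul n x y = (\<lambda>S. \<Sum>A\<in>Pow {..<n}. \<Sum>B\<in>Pow {..<n}.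
      if (A - B) \<union> (B - A) = S then (-1) ^ card (A \<inter> B) * x A * y B else 0)"

definition ptensor :: "nat \<Rightarrow> (nat \<Rightarrow> ce1) \<Rightarrow> tensor" where
  "ptensor n f = (\<lambda>S. if S \<subseteq> {..<n}
      then (\<Prod>i<n. if i \<in> S then snd (f i) else fst (f i)) else 0)"

text \<open>Action of a permutation sigma of {0..<n}:
sigma(x_1 (x) ... (x) x_n) = x_{sigma^-1 1} (x) ... (x) x_{sigma^-1 n}, i.e. e_S maps to e_(sigma S).\<close>
definition tperm :: "(nat \<Rightarrow> nat) \<Rightarrow> tensor \<Rightarrow> tensor" where
  "tperm \<sigma> x = (\<lambda>T. x (inv \<sigma> ` T))"

definition symz :: "nat \<Rightarrow> tensor \<Rightarrow> tensor" where
  "symz n x = (\<lambda>S. (1 / of_nat (fact n)) * (\<Sum>\<sigma>\<in>{\<sigma>. \<sigma> permutes {..<n}}. tperm \<sigma> x S))"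

definition Sym :: "nat \<Rightarrow> tensor set" where
  "Sym n = {x \<in> tensors n. \<forall>\<sigma>. \<sigma> permutes {..<n} \<longrightarrow> tperm \<sigma> x = x}"

definition idempotent :: "nat \<Rightarrow> tensor \<Rightarrow> bool" where
  "idempotent n x \<longleftrightarrow> tmul n x x = x"

definition orthogonal :: "nat \<Rightarrow> tensor \<Rightarrow> tensor \<Rightarrow> bool" where
  "orthogonal n x y \<longleftrightarrow> tmul n x y = tzero \<and> tmul n y x = tzero"

definition primitive_in_Sym :: "nat \<Rightarrow> tensor \<Rightarrow> bool" where
  "primitive_in_Sym n e \<longleftrightarrow> e \<in> Sym n \<and> e \<noteq> tzero \<and> idempotent n e \<and>
     \<not> (\<exists>f \<in> Sym n. \<exists>g \<in> Sym n. f \<noteq> tzero \<and> g \<noteq> tzero \<and> idempotent n f \<and>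
          idempotent n g \<and> orthogonal n f g \<and> tadd f g = e)"

definition a_el :: ce1 where "a_el = (1/2, \<i>/2)"
definition ac_el :: ce1 where "ac_el = (1/2, - \<i>/2)"

definition idem :: "nat \<Rightarrow> nat \<Rightarrow> tensor" where
  "idem n k = tscale (of_nat (n choose k))
     (symz n (ptensor n (\<lambda>i. if i < k then a_el else ac_el)))"

end

theory Submission
  imports Defs
begin


definition lam :: "nat set \<Rightarrow> nat \<Rightarrow> complex" where
  "lam T i = (if i \<in> T then - \<i> else \<i>)"
definition chi :: "nat set \<Rightarrow> nat set \<Rightarrow> complex" where
  "chi T A = (\<Prod>i\<in>A. lam T i)"
definition HH :: "nat \<Rightarrow> nat set \<Rightarrow> tensor \<Rightarrow> complex" where
  "HH n T x = (\<Sum>A\<in>Pow {..<n}. x A * chi T A)"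

lemma lam_sq: "lam T i * lam T i = -1"
  by (simp add: lam_def)

lemma chi_mult:
  assumes "finite A" "finite B"
  shows "(-1) ^ card (A \<inter> B) * chi T ((A - B) \<union> (B - A)) = chi T A * chi T B"
proof -
  have fin: "finite (A - B)" "finite (B - A)" "finite (A \<inter> B)" using assms by auto
  have a: "chi T A = chi T (A - B) * chi T (A \<inter> B)"
    unfolding chi_def using fin by (subst prod.union_disjoint[symmetric]) (auto intro: prod.cong)
  have b: "chi T B = chi T (B - A) * chi T (A \<inter> B)"
    unfolding chi_def using fin by (subst prod.union_disjoint[symmetric]) (auto intro: prod.cong)
  have c: "chi T ((A - B) \<union> (B - A)) = chi T (A - B) * chi T (B - A)"
    unfolding chi_def using fin by (subst prod.union_disjoint) auto
  have d: "chi T (A \<inter> B) * chi T (A \<inter> B) = (-1) ^ card (A \<inter> B)"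
    unfolding chi_def prod.distrib[symmetric] lam_sq by simp
  show ?thesis using a b c d by (simp add: algebra_simps)
qed

lemma HH_tmul:
  "HH n T (tmul n x y) = HH n T x * HH n T y"
proof -
  let ?P = "Pow {..<n}"
  let ?c = "\<lambda>A B. (-1) ^ card (A \<inter> B) * x A * y B"
  have "HH n T (tmul n x y) = (\<Sum>S\<in>?P. \<Sum>A\<in>?P. \<Sum>B\<in>?P.
      (if (A - B) \<union> (B - A) = S then ?c A B * chi T S else 0))"
    unfolding HH_def tmul_def sum_distrib_right by (intro sum.cong refl) auto
  also have "\<dots> = (\<Sum>A\<in>?P. \<Sum>B\<in>?P. \<Sum>S\<in>?P.
      (if (A - B) \<union> (B - A) = S then ?c A B * chi T S else 0))"
    by (subst sum.swap) (subst (2) sum.swap, rule refl)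
  also have "\<dots> = (\<Sum>A\<in>?P. \<Sum>B\<in>?P. ?c A B * chi T ((A - B) \<union> (B - A)))"
    by (intro sum.cong refl) (auto simp: sum.delta)
  also have "\<dots> = (\<Sum>A\<in>?P. \<Sum>B\<in>?P. (x A * chi T A) * (y B * chi T B))"
  proof (intro sum.cong refl)
    fix A B assume "A \<in> ?P" "B \<in> ?P"
    then have "finite A" "finite B" by (auto intro: finite_subset)
    from chi_mult[OF this, of T] show "?c A B * chi T ((A - B) \<union> (B - A)) = (x A * chi T A) * (y B * chi T B)"
      by (simp add: algebra_simps)
  qed
  also have "\<dots> = HH n T x * HH n T y"
    unfolding HH_def sum_product by simp
  finally show ?thesis .
qed


lemma sum_Pow_prod:
  fixes F :: "'a \<Rightarrow> bool \<Rightarrow> 'c::comm_semiring_1"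
  assumes "finite A"
  shows "(\<Sum>T\<in>Pow A. \<Prod>i\<in>A. F i (i \<in> T)) = (\<Prod>i\<in>A. F i True + F i False)"
proof -
  have "(\<Prod>i\<in>A. F i True + F i False) = (\<Sum>X\<in>Pow A. (\<Prod>i\<in>X. F i True) * (\<Prod>i\<in>A-X. F i False))"
    by (rule prod_add[OF assms])
  also have "\<dots> = (\<Sum>T\<in>Pow A. \<Prod>i\<in>A. F i (i \<in> T))"
  proof (intro sum.cong refl)
    fix X assume X: "X \<in> Pow A"
    then have fx: "finite X" using assms finite_subset by auto
    have "(\<Prod>i\<in>A. F i (i \<in> X)) = (\<Prod>i\<in>X \<union> (A - X). F i (i \<in> X))"
      using X by (intro prod.cong) auto
    also have "\<dots> = (\<Prod>i\<in>X. F i (i \<in> X)) * (\<Prod>i\<in>A-X. F i (i \<in> X))"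
      using fx assms by (intro prod.union_disjoint) auto
    also have "\<dots> = (\<Prod>i\<in>X. F i True) * (\<Prod>i\<in>A-X. F i False)"
      by (intro arg_cong2[where f="(*)"] prod.cong) auto
    finally show "(\<Prod>i\<in>X. F i True) * (\<Prod>i\<in>A-X. F i False) = (\<Prod>i\<in>A. F i (i \<in> X))" by simp
  qed
  finally show ?thesis by simp
qed

definition chib :: "nat set \<Rightarrow> nat set \<Rightarrow> complex" where
  "chib T A = (\<Prod>i\<in>A. - lam T i)"

lemma chi_orth:
  assumes "A \<subseteq> {..<n}" "B \<subseteq> {..<n}"
  shows "(\<Sum>T\<in>Pow {..<n}. chi T A * chib T B) = (if A = B then 2 ^ n else 0)"
proof -
  define l :: "bool \<Rightarrow> complex" where "l t = (if t then - \<i> else \<i>)" for t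
  define F where "F i t = (if i \<in> A then l t else 1) * (if i \<in> B then - l t else 1)" for i t
  have eq: "chi T A * chib T B = (\<Prod>i\<in>{..<n}. F i (i \<in> T))" for T
  proof -
    have "chi T A = (\<Prod>i\<in>{..<n}. if i \<in> A then lam T i else 1)"
      unfolding chi_def using assms by (subst prod.inter_restrict[symmetric]) (simp_all add: Int_absorb1)
    moreover have "chib T B = (\<Prod>i\<in>{..<n}. if i \<in> B then - lam T i else 1)"
      unfolding chib_def using assms by (subst prod.inter_restrict[symmetric]) (simp_all add: Int_absorb1)
    ultimately show ?thesis unfolding F_def
      by (simp add: prod.distrib lam_def l_def cong: if_cong)
  qed
  have fac: "F i True + F i False = (if (i \<in> A) = (i \<in> B) then 2 else 0)" for i
    by (auto simp: F_def l_def)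
  have "(\<Sum>T\<in>Pow {..<n}. chi T A * chib T B) = (\<Prod>i\<in>{..<n}. F i True + F i False)"
    unfolding eq by (rule sum_Pow_prod) simp
  also have "\<dots> = (\<Prod>i\<in>{..<n}. (if (i \<in> A) = (i \<in> B) then 2 else 0))"
    using fac by simp
  also have "\<dots> = (if A = B then 2 ^ n else 0)"
  proof (cases "A = B")
    case True then show ?thesis by simp
  next
    case False
    then obtain i where "(i \<in> A) \<noteq> (i \<in> B)" by blast
    moreover then have "i \<in> {..<n}" using assms by auto
    ultimately have "(\<Prod>i\<in>{..<n}. (if (i \<in> A) = (i \<in> B) then 2 else 0 :: complex)) = 0"
      by (intro prod_zero) auto
    then show ?thesis using False by simp
  qed
  finally show ?thesis .
qed

lemma HH_inv:
  assumes "x \<in> tensors n" "B \<subseteq> {..<n}"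
  shows "(\<Sum>T\<in>Pow {..<n}. HH n T x * chib T B) = 2 ^ n * x B"
proof -
  have "(\<Sum>T\<in>Pow {..<n}. HH n T x * chib T B) = (\<Sum>T\<in>Pow {..<n}. \<Sum>A\<in>Pow {..<n}. x A * (chi T A * chib T B))"
    unfolding HH_def sum_distrib_right by (simp add: algebra_simps)
  also have "\<dots> = (\<Sum>A\<in>Pow {..<n}. x A * (\<Sum>T\<in>Pow {..<n}. chi T A * chib T B))"
    by (subst sum.swap) (simp add: sum_distrib_left)
  also have "\<dots> = (\<Sum>A\<in>Pow {..<n}. if A = B then x A * 2 ^ n else 0)"
    using assms by (intro sum.cong refl) (auto simp: chi_orth)
  also have "\<dots> = 2 ^ n * x B" using assms by (simp add: sum.delta')
  finally show ?thesis .
qed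

lemma HH_inj:
  assumes "x \<in> tensors n" "y \<in> tensors n" "\<And>T. T \<subseteq> {..<n} \<Longrightarrow> HH n T x = HH n T y"
  shows "x = y"
proof
  fix B
  show "x B = y B"
  proof (cases "B \<subseteq> {..<n}")
    case True
    have "2 ^ n * x B = 2 ^ n * y B"
      using HH_inv[OF assms(1) True] HH_inv[OF assms(2) True] assms(3) by simp
    then show ?thesis by simp
  next
    case False then show ?thesis using assms by (simp add: tensors_def)
  qed
qed


lemma HH_tscale: "HH n T (tscale c x) = c * HH n T x"
  unfolding HH_def tscale_def by (simp add: sum_distrib_left algebra_simps)
lemma HH_tadd: "HH n T (tadd x y) = HH n T x + HH n T y"
  unfolding HH_def tadd_def by (simp add: sum.distrib algebra_simps)
lemma HH_tzero: "HH n T tzero = 0"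
  unfolding HH_def tzero_def by simp
lemma HH_tsum: "HH n T (tsum I f) = (\<Sum>k\<in>I. HH n T (f k))"
  unfolding HH_def tsum_def sum_distrib_right by (rule sum.swap)
lemma HH_tone: "HH n T (tone n) = 1"
proof -
  have "HH n T (tone n) = (\<Sum>A\<in>Pow {..<n}. if A = {} then chi T A else 0)"
    unfolding HH_def tone_def by (intro sum.cong) auto
  also have "\<dots> = 1" by (simp add: chi_def)
  finally show ?thesis .
qed

lemma HH_symz: "HH n T (symz n x) = (1 / of_nat (fact n)) * (\<Sum>\<sigma>\<in>{\<sigma>. \<sigma> permutes {..<n}}. HH n T (tperm \<sigma> x))"
  unfolding HH_def symz_def sum_distrib_left sum_distrib_right
  by (subst sum.swap) (simp add: algebra_simps)

lemma image_Pow_perm: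
  assumes "\<sigma> permutes S"
  shows "bij_betw (image \<sigma>) (Pow S) (Pow S)"
proof (rule bij_betw_imageI)
  show "inj_on ((`) \<sigma>) (Pow S)"
    using permutes_inj[OF assms] by (simp add: inj_on_def inj_image_eq_iff)
  show "(`) \<sigma> ` Pow S = Pow S"
  proof
    show "(`) \<sigma> ` Pow S \<subseteq> Pow S" using permutes_image[OF assms] by auto
    show "Pow S \<subseteq> (`) \<sigma> ` Pow S"
    proof
      fix A assume A: "A \<in> Pow S"
      have "A = \<sigma> ` (inv \<sigma> ` A)" using permutes_inverses[OF assms] by (auto simp: image_iff)
      moreover have "inv \<sigma> ` A \<in> Pow S" using A permutes_image[OF permutes_inv[OF assms]] by auto
      ultimately show "A \<in> (`) \<sigma> ` Pow S" by blast
    qed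
  qed
qed

lemma HH_tperm:
  assumes "\<sigma> permutes {..<n}"
  shows "HH n T (tperm \<sigma> x) = HH n (inv \<sigma> ` T) x"
proof -
  have "HH n T (tperm \<sigma> x) = (\<Sum>A\<in>Pow {..<n}. x (inv \<sigma> ` A) * chi T A)"
    unfolding HH_def tperm_def by simp
  also have "\<dots> = (\<Sum>B\<in>Pow {..<n}. x (inv \<sigma> ` (\<sigma> ` B)) * chi T (\<sigma> ` B))"
    by (rule sum.reindex_bij_betw[OF image_Pow_perm[OF assms], symmetric])
  also have "\<dots> = (\<Sum>B\<in>Pow {..<n}. x B * chi (inv \<sigma> ` T) B)"
  proof (intro sum.cong refl)
    fix B assume "B \<in> Pow {..<n}"
    have i1: "inv \<sigma> ` (\<sigma> ` B) = B" using permutes_inverses[OF assms] by (auto simp: image_iff)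
    have "chi T (\<sigma> ` B) = (\<Prod>j\<in>B. lam T (\<sigma> j))"
      unfolding chi_def by (subst prod.reindex) (auto intro: inj_on_subset[OF permutes_inj_on[OF assms]])
    also have "\<dots> = chi (inv \<sigma> ` T) B"
      unfolding chi_def
    proof (intro prod.cong refl)
      fix j
      have "(\<sigma> j \<in> T) = (j \<in> inv \<sigma> ` T)"
        using permutes_inverses[OF assms] by (metis image_eqI imageE)
      then show "lam T (\<sigma> j) = lam (inv \<sigma> ` T) j" by (simp add: lam_def)
    qed
    finally show "x (inv \<sigma> ` (\<sigma> ` B)) * chi T (\<sigma> ` B) = x B * chi (inv \<sigma> ` T) B"
      using i1 by simp
  qed
  finally show ?thesis unfolding HH_def .
qed

lemma HH_ptensor:
  assumes "U \<subseteq> {..<n}"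
  shows "HH n U (ptensor n f) = (\<Prod>i<n. fst (f i) + snd (f i) * lam U i)"
proof -
  define G where "G i t = (if t then snd (f i) * lam U i else fst (f i))" for i t
  have "HH n U (ptensor n f) = (\<Sum>A\<in>Pow {..<n}. \<Prod>i<n. G i (i \<in> A))"
    unfolding HH_def
  proof (intro sum.cong refl)
    fix A assume A: "A \<in> Pow {..<n}"
    have "chi U A = (\<Prod>i<n. if i \<in> A then lam U i else 1)"
      unfolding chi_def using A by (subst prod.inter_restrict[symmetric]) (auto simp: Int_absorb1)
    then show "ptensor n f A * chi U A = (\<Prod>i<n. G i (i \<in> A))"
      using A unfolding ptensor_def G_def by (simp add: prod.distrib[symmetric], intro prod.cong) auto
  qed
  also have "\<dots> = (\<Prod>i<n. G i True + G i False)"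
    by (rule sum_Pow_prod) simp
  finally show ?thesis by (simp add: G_def algebra_simps)
qed

lemma HH_pK:
  assumes "U \<subseteq> {..<n}" "k \<le> n"
  shows "HH n U (ptensor n (\<lambda>i. if i < k then a_el else ac_el)) = (if U = {..<k} then 1 else 0)"
proof -
  have fac: "fst (if i < k then a_el else ac_el) + snd (if i < k then a_el else ac_el) * lam U i
      = (if (i < k) = (i \<in> U) then 1 else 0)" for i
    by (auto simp: a_el_def ac_el_def lam_def field_simps)
  show ?thesis
  proof (cases "U = {..<k}")
    case True
    then show ?thesis using HH_ptensor[OF assms(1)] fac by simp
  next
    case False
    then obtain i where i: "(i < k) \<noteq> (i \<in> U)" by auto
    then have "i < n" using assms by auto
    then have "(\<Prod>i<n. (if (i < k) = (i \<in> U) then 1 else 0 :: complex)) = 0"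
      using i by (intro prod_zero) auto
    then show ?thesis using HH_ptensor[OF assms(1)] fac False by simp
  qed
qed


lemma perm_transitive:
  assumes "finite S" "T \<subseteq> S" "T' \<subseteq> S" "card T = card T'"
  shows "\<exists>\<tau>. \<tau> permutes S \<and> \<tau> ` T = T'"
proof -
  have fT: "finite T" "finite T'" using assms finite_subset by auto
  obtain f where f: "bij_betw f T T'" using finite_same_card_bij[OF fT assms(4)] by blast
  have "card (S - T) = card (S - T')"
    using assms fT by (simp add: card_Diff_subset)
  then obtain g where g: "bij_betw g (S - T) (S - T')"
    using finite_same_card_bij assms(1) by (meson finite_Diff)
  define \<tau> where "\<tau> x = (if x \<in> T then f x else if x \<in> S then g x else x)" for x
  have b1: "bij_betw \<tau> T T'" using f by (rule bij_betw_cong[THEN iffD1, rotated]) (simp add: \<tau>_def)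
  have b2: "bij_betw \<tau> (S - T) (S - T')" using g by (rule bij_betw_cong[THEN iffD1, rotated]) (simp add: \<tau>_def)
  have "bij_betw \<tau> (T \<union> (S - T)) (T' \<union> (S - T'))"
    by (rule bij_betw_combine[OF b1 b2]) auto
  moreover have "T \<union> (S - T) = S" "T' \<union> (S - T') = S" using assms by auto
  ultimately have "bij_betw \<tau> S S" by simp
  then have "\<tau> permutes S" by (rule bij_imp_permutes) (auto simp: \<tau>_def assms(2)[THEN subsetD])
  moreover have "\<tau> ` T = T'" using b1 by (simp add: bij_betw_def)
  ultimately show ?thesis by blast
qed

definition NN :: "nat \<Rightarrow> nat \<Rightarrow> nat set \<Rightarrow> nat" where
  "NN n k T = card {\<sigma>. \<sigma> permutes {..<n} \<and> \<sigma> ` T = {..<k}}"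

lemma NN_le:
  assumes "T \<subseteq> {..<n}" "T' \<subseteq> {..<n}" "card T = card T'"
  shows "NN n k T \<le> NN n k T'"
proof -
  obtain \<tau> where t: "\<tau> permutes {..<n}" "\<tau> ` T' = T"
    using perm_transitive[of "{..<n}" T' T] assms by auto
  show ?thesis unfolding NN_def
  proof (rule card_inj_on_le)
    show "inj_on (\<lambda>\<sigma>. \<sigma> \<circ> \<tau>) {\<sigma>. \<sigma> permutes {..<n} \<and> \<sigma> ` T = {..<k}}"
    proof (rule inj_onI)
      fix s1 s2 assume "s1 \<circ> \<tau> = s2 \<circ> \<tau>"
      then have "s1 (\<tau> (inv \<tau> x)) = s2 (\<tau> (inv \<tau> x))" for x by (metis comp_apply)
      then show "s1 = s2" using permutes_inverses(1)[OF t(1)] by (simp add: fun_eq_iff)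
    qed
    show "(\<lambda>\<sigma>. \<sigma> \<circ> \<tau>) ` {\<sigma>. \<sigma> permutes {..<n} \<and> \<sigma> ` T = {..<k}}
        \<subseteq> {\<sigma>. \<sigma> permutes {..<n} \<and> \<sigma> ` T' = {..<k}}"
    proof (rule image_subsetI)
      fix \<sigma> assume "\<sigma> \<in> {\<sigma>. \<sigma> permutes {..<n} \<and> \<sigma> ` T = {..<k}}"
      then have s: "\<sigma> permutes {..<n}" "\<sigma> ` T = {..<k}" by simp_all
      have a: "\<sigma> \<circ> \<tau> permutes {..<n}" by (rule permutes_compose[OF t(1) s(1)])
      have b: "(\<sigma> \<circ> \<tau>) ` T' = {..<k}" using s(2) t(2) by (metis image_comp)
      show "\<sigma> \<circ> \<tau> \<in> {\<sigma>. \<sigma> permutes {..<n} \<and> \<sigma> ` T' = {..<k}}" using a b by simp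
    qed
    show "finite {\<sigma>. \<sigma> permutes {..<n} \<and> \<sigma> ` T' = {..<k}}"
      using finite_permutations[of "{..<n}"] by (rule finite_subset[rotated]) auto
  qed
qed

lemma NN_eq:
  assumes "T \<subseteq> {..<n}" "T' \<subseteq> {..<n}" "card T = card T'"
  shows "NN n k T = NN n k T'"
  by (intro antisym NN_le) (use assms in auto)

lemma NN_zero:
  assumes "T \<subseteq> {..<n}" "card T \<noteq> k"
  shows "NN n k T = 0"
proof -
  have "{\<sigma>. \<sigma> permutes {..<n} \<and> \<sigma> ` T = {..<k}} = {}"
  proof (safe)
    fix \<sigma> assume "\<sigma> permutes {..<n}" "\<sigma> ` T = {..<k}"
    then have "card {..<k} = card T" by (metis card_image permutes_inj_on)
    then show "\<sigma> \<in> {}" using assms by simp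
  qed
  then show ?thesis unfolding NN_def by (metis card.empty)
qed

lemma NN_val:
  assumes "T \<subseteq> {..<n}" "card T = k"
  shows "NN n k T * (n choose k) = fact n"
proof -
  let ?S = "{\<sigma>. \<sigma> permutes {..<n}}"
  let ?Tk = "{B. B \<subseteq> {..<n} \<and> card B = k}"
  have kn: "k \<le> n" using assms card_mono[of "{..<n}" T] by simp
  have fS: "finite ?S" by (rule finite_permutations) simp
  have fT: "finite ?Tk" by (rule finite_subset[of _ "Pow {..<n}"]) auto
  have sub: "(\<lambda>\<sigma>. inv \<sigma> ` {..<k}) ` ?S \<subseteq> ?Tk"
  proof safe
    fix \<sigma> x assume s: "\<sigma> permutes {..<n}" "x < k"
    show "inv \<sigma> x < n" using permutes_in_image[OF permutes_inv[OF s(1)], of x] s kn by simp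
  next
    fix \<sigma> assume s: "\<sigma> permutes {..<n}"
    show "card (inv \<sigma> ` {..<k}) = k"
      by (simp add: card_image permutes_inj_on[OF permutes_inv[OF s]])
  qed
  have "(\<Sum>B\<in>?Tk. \<Sum>\<sigma>\<in>{\<sigma> \<in> ?S. inv \<sigma> ` {..<k} = B}. (1::nat)) = (\<Sum>\<sigma>\<in>?S. 1)"
    by (rule sum.group[OF fS fT sub])
  moreover have "{\<sigma> \<in> ?S. inv \<sigma> ` {..<k} = B} = {\<sigma>. \<sigma> permutes {..<n} \<and> \<sigma> ` B = {..<k}}" for B
  proof -
    have "(inv \<sigma> ` {..<k} = B) = (\<sigma> ` B = {..<k})" if s: "\<sigma> permutes {..<n}" for \<sigma>
    proof
      assume h: "inv \<sigma> ` {..<k} = B"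
      show "\<sigma> ` B = {..<k}" unfolding h[symmetric] image_image permutes_inverses[OF s] by simp
    next
      assume h: "\<sigma> ` B = {..<k}"
      show "inv \<sigma> ` {..<k} = B" unfolding h[symmetric] image_image permutes_inverses[OF s] by simp
    qed
    then show ?thesis by (intro Collect_cong) (metis mem_Collect_eq)
  qed
  ultimately have "(\<Sum>B\<in>?Tk. NN n k B) = card ?S" unfolding NN_def by simp
  also have "\<dots> = fact n" by (simp add: card_permutations)
  finally have "(\<Sum>B\<in>?Tk. NN n k B) = fact n" .
  moreover have "(\<Sum>B\<in>?Tk. NN n k B) = (\<Sum>B\<in>?Tk. NN n k T)"
    using assms by (intro sum.cong refl NN_eq) auto
  moreover have "card ?Tk = n choose k" using n_subsets[of "{..<n}" k] by simp
  ultimately show ?thesis by (simp add: mult.commute)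
qed


lemma perm_image_sub:
  assumes "\<sigma> permutes {..<n}" "T \<subseteq> {..<n}"
  shows "\<sigma> ` T \<subseteq> {..<n}"
  using assms permutes_image[OF assms(1)] by auto

lemma tperm_tensors:
  assumes "\<sigma> permutes {..<n}" "x \<in> tensors n"
  shows "tperm \<sigma> x \<in> tensors n"
  unfolding tensors_def tperm_def
proof (intro CollectI allI impI)
  fix S assume S: "\<not> S \<subseteq> {..<n}"
  have "\<not> inv \<sigma> ` S \<subseteq> {..<n}"
  proof
    assume "inv \<sigma> ` S \<subseteq> {..<n}"
    then have "\<sigma> ` (inv \<sigma> ` S) \<subseteq> {..<n}" using perm_image_sub[OF assms(1)] by blast
    moreover have "\<sigma> ` (inv \<sigma> ` S) = S" unfolding image_image permutes_inverses[OF assms(1)] by simp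
    ultimately show False using S by simp
  qed
  then show "x (inv \<sigma> ` S) = 0" using assms(2) by (simp add: tensors_def)
qed

lemma symz_tensors:
  assumes "x \<in> tensors n"
  shows "symz n x \<in> tensors n"
  using tperm_tensors[OF _ assms] unfolding tensors_def symz_def by simp

lemma tscale_tensors: "x \<in> tensors n \<Longrightarrow> tscale c x \<in> tensors n"
  unfolding tensors_def tscale_def by simp

lemma ptensor_tensors: "ptensor n f \<in> tensors n"
  unfolding tensors_def ptensor_def by simp

lemma tmul_tensors: "tmul n x y \<in> tensors n"
  unfolding tensors_def tmul_def by (intro CollectI allI impI sum.neutral ballI) auto

lemma tsum_tensors: "(\<And>k. k \<in> I \<Longrightarrow> f k \<in> tensors n) \<Longrightarrow> tsum I f \<in> tensors n"
  unfolding tensors_def tsum_def by simp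

lemma tone_tensors: "tone n \<in> tensors n"
  unfolding tensors_def tone_def by simp

lemma tzero_tensors: "tzero \<in> tensors n"
  unfolding tensors_def tzero_def by simp

lemma idem_tensors: "idem n k \<in> tensors n"
  unfolding idem_def by (intro tscale_tensors symz_tensors ptensor_tensors)

lemma HH_idem:
  assumes "T \<subseteq> {..<n}" "k \<le> n"
  shows "HH n T (idem n k) = (if card T = k then 1 else 0)"
proof -
  let ?p = "ptensor n (\<lambda>i. if i < k then a_el else ac_el)"
  let ?S = "{\<sigma>. \<sigma> permutes {..<n}}"
  have "(\<Sum>\<sigma>\<in>?S. HH n T (tperm \<sigma> ?p)) = (\<Sum>\<sigma>\<in>?S. if inv \<sigma> ` T = {..<k} then 1 else 0)"
  proof (intro sum.cong refl)
    fix \<sigma> assume "\<sigma> \<in> ?S"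
    then have s: "\<sigma> permutes {..<n}" by simp
    have "inv \<sigma> ` T \<subseteq> {..<n}" by (rule perm_image_sub[OF permutes_inv[OF s] assms(1)])
    then show "HH n T (tperm \<sigma> ?p) = (if inv \<sigma> ` T = {..<k} then 1 else 0)"
      using HH_tperm[OF s] HH_pK[OF _ assms(2)] by simp
  qed
  also have "\<dots> = (\<Sum>\<sigma>\<in>?S. if \<sigma> ` T = {..<k} then 1 else 0)"
    by (rule sum_permutations_inverse[symmetric])
  also have "\<dots> = of_nat (NN n k T)"
    unfolding NN_def
    by (subst sum.inter_filter[symmetric]) (simp_all add: finite_permutations)
  finally have eq: "(\<Sum>\<sigma>\<in>?S. HH n T (tperm \<sigma> ?p)) = of_nat (NN n k T)" .
  have "HH n T (idem n k) = of_nat (n choose k) * (1 / of_nat (fact n)) * of_nat (NN n k T)"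
    unfolding idem_def HH_tscale HH_symz eq by simp
  also have "\<dots> = (if card T = k then 1 else 0)"
  proof (cases "card T = k")
    case True
    have "of_nat (NN n k T) * of_nat (n choose k) = (of_nat (fact n) :: complex)"
      using NN_val[OF assms(1) True] by (metis of_nat_mult)
    then show ?thesis using True by (simp add: field_simps)
  next
    case False
    then show ?thesis using NN_zero[OF assms(1) False] by simp
  qed
  finally show ?thesis .
qed


lemma idem_Sym:
  assumes "k \<le> n"
  shows "idem n k \<in> Sym n"
  unfolding Sym_def
proof (intro CollectI conjI allI impI idem_tensors)
  fix \<sigma> assume s: "\<sigma> permutes {..<n}"
  show "tperm \<sigma> (idem n k) = idem n k"
  proof (rule HH_inj[OF tperm_tensors[OF s idem_tensors] idem_tensors])
    fix T assume T: "T \<subseteq> {..<n}"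
    have sub: "inv \<sigma> ` T \<subseteq> {..<n}" by (rule perm_image_sub[OF permutes_inv[OF s] T])
    have c: "card (inv \<sigma> ` T) = card T"
      by (rule card_image[OF permutes_inj_on[OF permutes_inv[OF s]]])
    show "HH n T (tperm \<sigma> (idem n k)) = HH n T (idem n k)"
      unfolding HH_tperm[OF s] HH_idem[OF sub assms] HH_idem[OF T assms] c ..
  qed
qed

lemma Sym_HH_card:
  assumes "f \<in> Sym n" "T \<subseteq> {..<n}" "T' \<subseteq> {..<n}" "card T = card T'"
  shows "HH n T f = HH n T' f"
proof -
  obtain \<tau> where t: "\<tau> permutes {..<n}" "\<tau> ` T = T'"
    using perm_transitive[of "{..<n}" T T'] assms by auto
  have "tperm \<tau> f = f" using assms(1) t(1) by (simp add: Sym_def)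
  then have "HH n T' f = HH n (inv \<tau> ` T') f" using HH_tperm[OF t(1), of T' f] by simp
  also have "inv \<tau> ` T' = T" unfolding t(2)[symmetric] image_image permutes_inverses[OF t(1)] by simp
  finally show ?thesis by simp
qed

lemma nonzero_HH:
  assumes "f \<in> tensors n" "f \<noteq> tzero"
  shows "\<exists>T. T \<subseteq> {..<n} \<and> HH n T f \<noteq> 0"
  using HH_inj[OF assms(1) tzero_tensors] assms(2) HH_tzero by metis

theorem lemma3p2:
  fixes n :: nat
  assumes "0 < n"
  shows "(\<forall>k\<le>n. primitive_in_Sym n (idem n k))
       \<and> (\<forall>k\<le>n. \<forall>l\<le>n. k \<noteq> l \<longrightarrow> orthogonal n (idem n k) (idem n l))
       \<and> tsum {..n} (idem n) = tone n"
proof (intro conjI allI impI)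
  fix k assume k: "k \<le> n"
  have Kn: "{..<k} \<subseteq> {..<n}" using k by auto
  have ne: "idem n k \<noteq> tzero"
  proof
    assume "idem n k = tzero"
    then have "HH n {..<k} (idem n k) = 0" by (simp add: HH_tzero)
    then show False using HH_idem[OF Kn k] by simp
  qed
  have idp: "idempotent n (idem n k)"
    unfolding idempotent_def
    by (rule HH_inj[OF tmul_tensors idem_tensors]) (simp add: HH_tmul HH_idem k)
  have nodec: "\<not> (\<exists>f \<in> Sym n. \<exists>g \<in> Sym n. f \<noteq> tzero \<and> g \<noteq> tzero \<and> idempotent n f \<and>
          idempotent n g \<and> orthogonal n f g \<and> tadd f g = idem n k)"
  proof
    assume "\<exists>f \<in> Sym n. \<exists>g \<in> Sym n. f \<noteq> tzero \<and> g \<noteq> tzero \<and> idempotent n f \<and>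
          idempotent n g \<and> orthogonal n f g \<and> tadd f g = idem n k"
    then obtain f g where f: "f \<in> Sym n" and g: "g \<in> Sym n" and fz: "f \<noteq> tzero" and gz: "g \<noteq> tzero"
      and fi: "idempotent n f" and gi: "idempotent n g" and o: "orthogonal n f g"
      and s: "tadd f g = idem n k" by blast
    have ft: "f \<in> tensors n" and gt: "g \<in> tensors n" using f g by (auto simp: Sym_def)
    have fT: "HH n T f * HH n T f = HH n T f" for T
      using fi unfolding idempotent_def by (metis HH_tmul)
    have gT: "HH n T g * HH n T g = HH n T g" for T
      using gi unfolding idempotent_def by (metis HH_tmul)
    have oT: "HH n T f * HH n T g = 0" for T
      using o unfolding orthogonal_def by (metis HH_tmul HH_tzero)
    have sT: "T \<subseteq> {..<n} \<Longrightarrow> HH n T f + HH n T g = (if card T = k then 1 else 0)" for T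
      using s HH_idem[OF _ k] by (metis HH_tadd)
    obtain T where T: "T \<subseteq> {..<n}" "HH n T f \<noteq> 0" using nonzero_HH[OF ft fz] by blast
    have f1: "HH n T f = 1" using fT[of T] T(2)
      by (metis mult_cancel_right1)
    have g0: "HH n T g = 0" using oT[of T] f1 by simp
    have cT: "card T = k" using sT[OF T(1)] f1 g0 by (auto split: if_splits)
    obtain T' where T': "T' \<subseteq> {..<n}" "HH n T' g \<noteq> 0" using nonzero_HH[OF gt gz] by blast
    have g1: "HH n T' g = 1" using gT[of T'] T'(2)
      by (metis mult_cancel_right1)
    have f0: "HH n T' f = 0" using oT[of T'] g1 by simp
    have cT': "card T' = k" using sT[OF T'(1)] f0 g1 by (auto split: if_splits)
    have "HH n T f = HH n T' f" using Sym_HH_card[OF f T(1) T'(1)] cT cT' by simp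
    then show False using f1 f0 by simp
  qed
  show "primitive_in_Sym n (idem n k)"
    unfolding primitive_in_Sym_def using idem_Sym[OF k] ne idp nodec by blast
next
  fix k l assume k: "k \<le> n" and l: "l \<le> n" and kl: "k \<noteq> l"
  have "tmul n (idem n k) (idem n l) = tzero"
    by (rule HH_inj[OF tmul_tensors tzero_tensors]) (use kl in \<open>auto simp: HH_tmul HH_idem k l HH_tzero\<close>)
  moreover have "tmul n (idem n l) (idem n k) = tzero"
    by (rule HH_inj[OF tmul_tensors tzero_tensors]) (use kl in \<open>auto simp: HH_tmul HH_idem k l HH_tzero\<close>)
  ultimately
  show "orthogonal n (idem n k) (idem n l)" unfolding orthogonal_def by simp
next
  show "tsum {..n} (idem n) = tone n"
  proof (rule HH_inj[OF tsum_tensors[OF idem_tensors] tone_tensors])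
    fix T assume T: "T \<subseteq> {..<n}"
    have cT: "card T \<le> n" using card_mono[OF _ T] by simp
    have "HH n T (tsum {..n} (idem n)) = (\<Sum>k\<in>{..n}. if card T = k then 1 else 0)"
      unfolding HH_tsum by (intro sum.cong refl) (simp add: HH_idem[OF T])
    also have "\<dots> = 1" using cT by (simp add: sum.delta)
    finally show "HH n T (tsum {..n} (idem n)) = HH n T (tone n)" by (simp add: HH_tone)
  qed
qed

end
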